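(* The function \[ \psi_1(z):=\rho z^2+\int_{(0,\infty)}(e^{-yz}-1+yz)\Big(\pi(dy)-\frac{\eta\,dy}{\Gamma(-1-\beta)y^{2+\beta}}\Big),\qquad z\ge0, \] can be uniquely extended to a complex-valued continuous function on $\mathbb C_+:=\{z\in\mathbb C:\mathrm{Re}\,z\ge0\}$ which is holomorphic on $\{z:\mathrm{Re}\,z>0\}$. Moreover, for all $\delta>0$ small enough there exists $C>0$ such that $|\psi_1(z)|\le C|z|^{1+\beta+\delta}+C|z|^2$ for all $z\in\mathbb C_+$.
   Context: Let $\rho\ge0$ and let $\pi$ be a measure on $(0,\infty)$ with $\int_{(0,\infty)}(y\wedge y^2)\pi(dy)<\infty$. Assume there exist $\eta>0$, $\beta\in(0,1)$ and $\delta>0$ with $\int_{(1,\infty)}y^{1+\beta+\delta}\big|\pi(dy)-\frac{\eta\,dy}{\Gamma(-1-\beta)y^{2+\beta}}\big|<\infty$, where $|\cdot|$ is total variation of a signed measure and $\Gamma$ is the analytically continued Gamma function; $\eta,\beta$ are these constants. (Note $\psi_1(z)=\psi(z)+\alpha z-\eta z^{1+\beta}$ for $\psi(z)=-\alpha z+\rho z^2+\int(e^{-zy}-1+zy)\pi(dy)$.) *)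

theory Defs
  imports "HOL-Analysis.Analysis"
begin

definition nu :: "real \<Rightarrow> real \<Rightarrow> real measure" where
  "nu \<eta> \<beta> = density lborel
     (\<lambda>y. ennreal (indicator {0<..} y * \<eta> / (Gamma (-1 - \<beta>) * y powr (2 + \<beta>))))"

definition tv_diff :: "'a measure \<Rightarrow> 'a measure \<Rightarrow> 'a measure" where
  "tv_diff M N = measure_of (space M) (sets M)
     (\<lambda>A. SUP P \<in> {P. finite P \<and> P \<subseteq> sets M \<and> disjoint P \<and> \<Union>P = A}.
            (\<Sum>B\<in>P. ennreal \<bar>measure M B - measure N B\<bar>))"

definition psi1 :: "real \<Rightarrow> real measure \<Rightarrow> real \<Rightarrow> real \<Rightarrow> real \<Rightarrow> real" where
  "psi1 \<rho> \<pi> \<eta> \<beta> z = \<rho> * z^2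
     + (LINT y:{0<..}|\<pi>. exp (- y * z) - 1 + y * z)
     - (LINT y:{0<..}|nu \<eta> \<beta>. exp (- y * z) - 1 + y * z)"

end

theory Submission
  imports Defs "HOL-Complex_Analysis.Complex_Analysis"
begin


lemma exp_diff_bound:
  fixes a b :: complex assumes "Re a \<ge> 0" "Re b \<ge> 0"
  shows "norm (exp (-a) - exp (-b)) \<le> norm (a - b)"
proof -
  have "norm ((\<lambda>z. exp (-z)) a - (\<lambda>z. exp (-z)) b) \<le> 1 * norm (a - b)"
  proof (rule field_differentiable_bound[where S="{z. Re z \<ge> 0}" and f'="\<lambda>z. - exp (-z)"])
    show "convex {z. Re z \<ge> 0}" by (rule convex_halfspace_Re_ge)
    fix z assume "z \<in> {z. 0 \<le> Re z}"
    then show "norm (- exp (-z)) \<le> 1" by (simp add: norm_exp_eq_Re)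
    show "((\<lambda>z. exp (-z)) has_field_derivative - exp (-z)) (at z within {z. 0 \<le> Re z})"
      by (auto intro!: derivative_eq_intros)
  qed (use assms in auto)
  then show ?thesis by simp
qed

lemma exp_diff_bound2:
  fixes a b :: complex assumes "Re a \<ge> 0" "Re b \<ge> 0"
  shows "norm (exp (-a) - exp (-b)) \<le> 2"
proof -
  have "norm (exp (-a) - exp (-b)) \<le> norm (exp (-a)) + norm (exp (-b))" by (rule norm_triangle_ineq4)
  also have "\<dots> \<le> 1 + 1" using assms by (intro add_mono) (auto simp: norm_exp_eq_Re)
  finally show ?thesis by simp
qed

lemma one_minus_exp_bound:
  fixes u :: complex assumes "Re u \<ge> 0"
  shows "norm (1 - exp (-u)) \<le> min 2 (norm u)"
  using exp_diff_bound[of 0 u] exp_diff_bound2[of 0 u] assms by simp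

lemma phi1_bound:
  fixes w :: complex assumes "Re w \<ge> 0"
  shows "norm (exp (-w) - 1 + w) \<le> min 2 (norm w) * norm w"
proof -
  let ?f = "\<lambda>t. exp (-t) - 1 + t"
  have "norm (?f w - ?f 0) \<le> min 2 (norm w) * norm (w - 0)"
  proof (rule field_differentiable_bound[where S="closed_segment 0 w" and f'="\<lambda>t. 1 - exp (-t)"])
    show "convex (closed_segment 0 w)" by simp
    fix t assume t: "t \<in> closed_segment 0 w"
    then obtain u where u: "0 \<le> u" "u \<le> 1" "t = u *\<^sub>R w"
      by (auto simp: closed_segment_def)
    have "Re t \<ge> 0" using u assms by simp
    moreover have "norm t \<le> norm w" using u by (simp add: mult_left_le_one_le)
    ultimately show "norm (1 - exp (-t)) \<le> min 2 (norm w)"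
      using one_minus_exp_bound[of t] by linarith
    show "(?f has_field_derivative 1 - exp (-t)) (at t within closed_segment 0 w)"
      by (auto intro!: derivative_eq_intros)
  qed auto
  then show ?thesis by simp
qed



definition phi :: "real \<Rightarrow> complex \<Rightarrow> complex" where
  "phi y z = exp (- (complex_of_real y * z)) - 1 + complex_of_real y * z"
definition dphi :: "real \<Rightarrow> complex \<Rightarrow> complex" where
  "dphi y z = complex_of_real y * (1 - exp (- (complex_of_real y * z)))"
definition mm :: "real \<Rightarrow> real" where "mm y = min y (y^2)"

lemma mm_le1: assumes "0 \<le> y" "y \<le> 1" shows "mm y = y^2"
proof -
  have "y * y \<le> y" using mult_left_le_one_le[of y y] assms by simp
  then show ?thesis by (simp add: mm_def power2_eq_square min_absorb2)
qed

lemma mm_gt1: assumes "y > 1" shows "mm y = y"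
  using assms by (simp add: mm_def min_def power2_eq_square)

lemma mm_nonneg: "0 \<le> y \<Longrightarrow> 0 \<le> mm y"
  by (simp add: mm_def)

lemma min2_mult_le: fixes a :: real assumes "a \<ge> 0"
  shows "min 2 a * a \<le> 2 * a" "min 2 a * a \<le> a^2"
  using assms by (auto simp: min_def power2_eq_square mult_right_mono)

lemma phi_bound_basic:
  assumes "y \<ge> 0" "Re z \<ge> 0"
  shows "norm (phi y z) \<le> min 2 (y * norm z) * (y * norm z)"
proof -
  have "Re (complex_of_real y * z) \<ge> 0" using assms by simp
  from phi1_bound[OF this] show ?thesis
    using assms by (simp add: phi_def norm_mult)
qed

lemma phi_bound_mm:
  assumes "y \<ge> 0" "Re z \<ge> 0"
  shows "norm (phi y z) \<le> (2 * norm z + norm z ^ 2) * mm y"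
proof -
  have a: "y * norm z \<ge> 0" using assms by simp
  note b = phi_bound_basic[OF assms]
  show ?thesis
  proof (cases "y \<le> 1")
    case True
    then have "mm y = y^2" using assms by (simp add: mm_le1)
    moreover have "norm (phi y z) \<le> (y * norm z)^2" using b min2_mult_le(2)[OF a] by linarith
    moreover have "0 \<le> norm z * (2 * y^2)" by simp
    ultimately show ?thesis by (simp add: power_mult_distrib algebra_simps del: mult_nonneg_nonneg)
  next
    case False
    then have "mm y = y" using assms by (simp add: mm_gt1)
    moreover have "norm (phi y z) \<le> 2 * (y * norm z)" using b min2_mult_le(1)[OF a] by linarith
    moreover have "0 \<le> y * norm z ^ 2" using assms by simp
    ultimately show ?thesis using assms False by (simp add: algebra_simps del: mult_nonneg_nonneg)
  qed
qed

lemma phi_bound_small: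
  assumes "y \<ge> 0" "Re z \<ge> 0"
  shows "norm (phi y z) \<le> norm z ^ 2 * y^2"
proof -
  have a: "y * norm z \<ge> 0" using assms by simp
  have "norm (phi y z) \<le> (y * norm z)^2" using phi_bound_basic[OF assms] min2_mult_le(2)[OF a] by linarith
  then show ?thesis by (simp add: power_mult_distrib algebra_simps)
qed

lemma phi_bound_tail:
  assumes "y > 1" "Re z \<ge> 0" "1 \<le> s" "s \<le> 2" "s \<le> e"
  shows "norm (phi y z) \<le> 2 * norm z powr s * y powr e"
proof -
  define a where "a = y * norm z"
  have a: "a \<ge> 0" using assms by (simp add: a_def)
  have "min 2 a * a \<le> 2 * a powr s"
  proof (cases "a \<le> 1")
    case True
    have "a^2 = a powr 2" using a by (simp add: powr_numeral)
    also have "\<dots> \<le> a powr s" using True a assms by (intro powr_mono') auto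
    finally show ?thesis using min2_mult_le(2)[OF a] a by (smt (verit) powr_ge_zero)
  next
    case False
    have "a = a powr 1" using False by simp
    also have "\<dots> \<le> a powr s" using False assms by (intro powr_mono) auto
    finally show ?thesis using min2_mult_le(1)[OF a] by linarith
  qed
  also have "a powr s = y powr s * norm z powr s" using assms by (simp add: a_def powr_mult)
  also have "y powr s \<le> y powr e" using assms by (intro powr_mono) auto
  finally have "min 2 a * a \<le> 2 * (y powr e * norm z powr s)"
    by (smt (verit, best) mult_right_mono powr_ge_zero)
  then show ?thesis using phi_bound_basic[of y z] assms unfolding a_def by (simp add: algebra_simps)
qed

lemma dphi_bound:
  assumes "y \<ge> 0" "Re z \<ge> 0"
  shows "norm (dphi y z) \<le> y * min 2 (y * norm z)"
proof -
  have "Re (complex_of_real y * z) \<ge> 0" using assms by simp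
  from one_minus_exp_bound[OF this] show ?thesis
    using assms by (simp add: dphi_def norm_mult mult_left_mono)
qed

lemma ymin_le_mm:
  assumes "y \<ge> 0" "0 \<le> R"
  shows "y * min 2 (y * R) \<le> (2 + R) * mm y"
proof (cases "y \<le> 1")
  case True
  then have "mm y = y^2" using assms by (simp add: mm_le1)
  moreover have "y * min 2 (y * R) \<le> y * (y * R)" using assms by (intro mult_left_mono) auto
  moreover have "y * (y * R) \<le> (2 + R) * y^2" using assms by (simp add: power2_eq_square algebra_simps)
  ultimately show ?thesis by simp
next
  case False
  then have "mm y = y" using assms by (simp add: mm_gt1)
  moreover have "y * min 2 (y * R) \<le> y * 2" using assms by (intro mult_left_mono) auto
  moreover have "0 \<le> R * y" using assms by simp
  ultimately show ?thesis using assms by (simp add: algebra_simps del: mult_nonneg_nonneg)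
qed

lemma phi_deriv: "((phi y) has_field_derivative dphi y z) (at z within S)"
  unfolding phi_def dphi_def
  by (auto intro!: derivative_eq_intros simp: algebra_simps)

lemma phi_lipschitz:
  assumes "y \<ge> 0" "Re z \<ge> 0" "Re w \<ge> 0" "norm z \<le> R" "norm w \<le> R"
  shows "norm (phi y w - phi y z) \<le> (2 + R) * mm y * norm (w - z)"
proof (rule field_differentiable_bound[where S="{z. Re z \<ge> 0} \<inter> cball 0 R" and f'="dphi y"])
  show "convex ({z. Re z \<ge> 0} \<inter> cball 0 R)" by (intro convex_Int convex_halfspace_Re_ge convex_cball)
  fix t assume t: "t \<in> {z. Re z \<ge> 0} \<inter> cball 0 R"
  show "((phi y) has_field_derivative dphi y t) (at t within {z. Re z \<ge> 0} \<inter> cball 0 R)"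
    by (rule phi_deriv)
  have "norm (dphi y t) \<le> y * min 2 (y * norm t)" using t assms by (intro dphi_bound) auto
  also have "\<dots> \<le> y * min 2 (y * R)" using t assms by (intro mult_left_mono min.mono mult_left_mono) auto
  also have "\<dots> \<le> (2 + R) * mm y" using assms t by (intro ymin_le_mm) (auto intro: order_trans[OF norm_ge_zero])
  finally show "norm (dphi y t) \<le> (2 + R) * mm y" .
qed (use assms in auto)

lemma phi_remainder:
  assumes "y \<ge> 0" "Re z \<ge> 0" "Re w \<ge> 0"
  shows "norm (phi y w - phi y z - dphi y z * (w - z)) \<le> y * min 2 (y * norm (w - z)) * norm (w - z)"
proof -
  let ?f = "\<lambda>t. phi y t - dphi y z * t"
  have "norm (?f w - ?f z) \<le> y * min 2 (y * norm (w - z)) * norm (w - z)"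
  proof (rule field_differentiable_bound[where S="closed_segment z w" and f'="\<lambda>t. dphi y t - dphi y z"])
    fix t assume t: "t \<in> closed_segment z w"
    show "(?f has_field_derivative dphi y t - dphi y z) (at t within closed_segment z w)"
      by (auto intro!: derivative_eq_intros phi_deriv)
    have Ret: "Re t \<ge> 0"
      using t convex_halfspace_Re_ge[of 0] assms closed_segment_subset[of z "{x. Re x \<ge> 0}" w]
      by (auto simp: convex_contains_segment)
    have dt: "norm (t - z) \<le> norm (w - z)"
      using t by (metis dist_commute dist_norm dist_in_closed_segment)
    have "dphi y t - dphi y z = complex_of_real y * (exp (- (complex_of_real y * z)) - exp (- (complex_of_real y * t)))"
      by (simp add: dphi_def algebra_simps)
    then have "norm (dphi y t - dphi y z) = y * norm (exp (- (complex_of_real y * z)) - exp (- (complex_of_real y * t)))"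
      using assms by (simp add: norm_mult)
    also have "\<dots> \<le> y * min 2 (y * norm (w - z))"
    proof (intro mult_left_mono)
      have a: "Re (complex_of_real y * z) \<ge> 0" "Re (complex_of_real y * t) \<ge> 0" using assms Ret by auto
      have "norm (exp (- (complex_of_real y * z)) - exp (- (complex_of_real y * t))) \<le> norm (complex_of_real y * z - complex_of_real y * t)"
        by (rule exp_diff_bound[OF a])
      also have "\<dots> = y * norm (t - z)" using assms
        by (simp add: norm_mult flip: right_diff_distrib) (simp add: norm_minus_commute)
      also have "\<dots> \<le> y * norm (w - z)" using dt assms by (intro mult_left_mono) auto
      finally show "norm (exp (- (complex_of_real y * z)) - exp (- (complex_of_real y * t))) \<le> min 2 (y * norm (w - z))"
        using exp_diff_bound2[OF a] by linarith
    qed (use assms in auto)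
    finally show "norm (dphi y t - dphi y z) \<le> y * min 2 (y * norm (w - z))" .
  qed auto
  then show ?thesis by (simp add: algebra_simps)
qed



definition Phi :: "real measure \<Rightarrow> complex \<Rightarrow> complex" where
  "Phi M z = (LINT y:{0<..}|M. phi y z)"
definition DPhi :: "real measure \<Rightarrow> complex \<Rightarrow> complex" where
  "DPhi M z = (LINT y:{0<..}|M. dphi y z)"

lemma phi_meas[measurable]: "(\<lambda>y. phi y z) \<in> borel_measurable borel"
  unfolding phi_def by measurable
lemma dphi_meas[measurable]: "(\<lambda>y. dphi y z) \<in> borel_measurable borel"
  unfolding dphi_def by measurable
lemma mm_meas[measurable]: "mm \<in> borel_measurable borel"
  unfolding mm_def by measurable

context
  fixes M :: "real measure"
  assumes sM: "sets M = sets borel"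
    and intM: "integrable M (\<lambda>y. indicator {0<..} y * mm y)"
begin

lemma measM: "f \<in> borel_measurable borel \<Longrightarrow> f \<in> borel_measurable M"
  using measurable_cong_sets[OF sM refl] by blast

lemma set_integrable_mm:
  fixes g :: "real \<Rightarrow> 'b::{banach, second_countable_topology}"
  assumes g: "g \<in> borel_measurable borel" and b: "\<And>y. y > 0 \<Longrightarrow> norm (g y) \<le> C * mm y"
  shows "set_integrable M {0<..} g"
  unfolding set_integrable_def
proof (rule Bochner_Integration.integrable_bound[where f="\<lambda>y. C * (indicator {0<..} y * mm y)"])
  show "integrable M (\<lambda>y. C * (indicator {0<..} y * mm y))" using intM by simp
  show "(\<lambda>x. indicator {0<..} x *\<^sub>R g x) \<in> borel_measurable M" using g by (intro measM) measurable
  show "AE x in M. norm (indicator {0<..} x *\<^sub>R g x) \<le> norm (C * (indicator {0<..} x * mm x))"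
  proof (intro AE_I2)
    fix x show "norm (indicator {0<..} x *\<^sub>R g x) \<le> norm (C * (indicator {0<..} x * mm x))"
      using b[of x] by (cases "x > 0") (auto simp: indicator_def)
  qed
qed

lemma set_integral_mm_bound:
  fixes g :: "real \<Rightarrow> 'b::{banach, second_countable_topology}"
  assumes g: "g \<in> borel_measurable borel" and b: "\<And>y. y > 0 \<Longrightarrow> norm (g y) \<le> C * mm y"
  shows "norm (LINT y:{0<..}|M. g y) \<le> C * (LINT y|M. indicator {0<..} y * mm y)"
proof -
  have "norm (LINT y:{0<..}|M. g y) \<le> (LINT y|M. C * (indicator {0<..} y * mm y))"
    unfolding set_lebesgue_integral_def
  proof (rule Bochner_Integration.integral_norm_bound_integral)
    show "integrable M (\<lambda>x. indicator {0<..} x *\<^sub>R g x)"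
      using set_integrable_mm[OF g b] by (simp add: set_integrable_def)
    show "integrable M (\<lambda>y. C * (indicator {0<..} y * mm y))" using intM by simp
    fix x show "norm (indicator {0<..} x *\<^sub>R g x) \<le> C * (indicator {0<..} x * mm x)"
      using b[of x] by (cases "x > 0") (auto simp: indicator_def)
  qed
  then show ?thesis by simp
qed

lemma phi_integrable: "Re z \<ge> 0 \<Longrightarrow> set_integrable M {0<..} (\<lambda>y. phi y z)"
  by (rule set_integrable_mm[where C="2 * norm z + norm z ^ 2"]) (auto intro: phi_bound_mm)

lemma dphi_integrable: "Re z \<ge> 0 \<Longrightarrow> set_integrable M {0<..} (\<lambda>y. dphi y z)"
  by (rule set_integrable_mm[where C="2 + norm z"])
     (auto intro: order_trans[OF dphi_bound ymin_le_mm])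

lemma Phi_lipschitz:
  assumes "Re z \<ge> 0" "Re w \<ge> 0" "norm z \<le> R" "norm w \<le> R"
  shows "norm (Phi M w - Phi M z) \<le> (2 + R) * norm (w - z) * (LINT y|M. indicator {0<..} y * mm y)"
proof -
  have "Phi M w - Phi M z = (LINT y:{0<..}|M. phi y w - phi y z)"
    unfolding Phi_def using phi_integrable assms by (simp add: set_integral_diff)
  also have "norm \<dots> \<le> (2 + R) * norm (w - z) * (LINT y|M. indicator {0<..} y * mm y)"
    by (rule set_integral_mm_bound) (use assms phi_lipschitz in \<open>auto simp: algebra_simps\<close>)
  finally show ?thesis .
qed

lemma Phi_cont: "continuous_on {z. Re z \<ge> 0} (Phi M)"
  unfolding continuous_on_iff
proof (intro ballI allI impI)
  fix z e assume z: "z \<in> {z. Re z \<ge> 0}" and e: "(0::real) < e"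
  define I where "I = (LINT y|M. indicator {0<..} y * mm y)"
  have I0: "I \<ge> 0" unfolding I_def by (intro integral_nonneg_AE AE_I2) (auto simp: mm_def indicator_def)
  define K where "K = (2 + (norm z + 1)) * I + 1"
  have K: "K > 0" using I0 unfolding K_def by (smt (verit) mult_nonneg_nonneg norm_ge_zero)
  define d where "d = min 1 (e / K)"
  have d: "d > 0" using e K by (simp add: d_def)
  show "\<exists>d>0. \<forall>x'\<in>{z. Re z \<ge> 0}. dist x' z < d \<longrightarrow> dist (Phi M x') (Phi M z) < e"
  proof (intro exI conjI ballI impI)
    show "d > 0" by fact
    fix w assume w: "w \<in> {z. Re z \<ge> 0}" and dw: "dist w z < d"
    have nw: "norm w \<le> norm z + 1"
      using dw norm_triangle_ineq2[of w z] unfolding d_def dist_norm by linarith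
    have "dist (Phi M w) (Phi M z) \<le> (2 + (norm z + 1)) * norm (w - z) * I"
      unfolding dist_norm I_def using z w nw by (intro Phi_lipschitz) auto
    also have "\<dots> = norm (w - z) * ((2 + (norm z + 1)) * I)" by simp
    also have "\<dots> \<le> norm (w - z) * K" unfolding K_def by (intro mult_left_mono) auto
    also have "\<dots> < d * K" using dw K by (simp add: dist_norm)
    also have "\<dots> \<le> e" using K e unfolding d_def by (simp add: field_simps min_def)
    finally show "dist (Phi M w) (Phi M z) < e" .
  qed
qed

lemma Rf_tendsto: "((\<lambda>h. LINT y|M. indicator {0<..} y * (y * min 2 (y * h))) \<longlongrightarrow> 0) (at_right 0)"
  unfolding filterlim_at_right_to_top
proof -
  have "((\<lambda>t. LINT y|M. indicator {0<..} y * (y * min 2 (y * inverse t))) \<longlongrightarrow> integral\<^sup>L M (\<lambda>y. 0::real)) at_top"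
  proof (rule integral_dominated_convergence_at_top[where w="\<lambda>y. 3 * (indicator {0<..} y * mm y)"])
    show "(\<lambda>y. 0::real) \<in> borel_measurable M" by simp
    show "(\<lambda>y. indicator {0<..} y * (y * min 2 (y * inverse t))) \<in> borel_measurable M" for t
      by (intro measM) measurable
    show "integrable M (\<lambda>y. 3 * (indicator {0<..} y * mm y))" using intM by simp
    show "AE y in M. ((\<lambda>t. indicator {0<..} y * (y * min 2 (y * inverse t))) \<longlongrightarrow> 0) at_top"
    proof (intro AE_I2)
      fix y :: real
      have "((\<lambda>t. y * inverse t) \<longlongrightarrow> y * 0) at_top"
        by (intro tendsto_mult tendsto_const tendsto_inverse_0_at_top filterlim_ident)
      then have "((\<lambda>t. min 2 (y * inverse t)) \<longlongrightarrow> min 2 (y * 0)) at_top"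
        by (intro tendsto_min tendsto_const)
      then have "((\<lambda>t. indicator {0<..} y * (y * min 2 (y * inverse t))) \<longlongrightarrow> indicator {0<..} y * (y * min 2 (y * 0))) at_top"
        by (intro tendsto_mult tendsto_const)
      then show "((\<lambda>t. indicator {0<..} y * (y * min 2 (y * inverse t))) \<longlongrightarrow> 0) at_top" by simp
    qed
    show "\<forall>\<^sub>F t in at_top. AE y in M. norm (indicator {0<..} y * (y * min 2 (y * inverse t))) \<le> 3 * (indicator {0<..} y * mm y)"
      using eventually_ge_at_top[of "1::real"]
    proof eventually_elim
      case (elim t)
      show ?case
      proof (intro AE_I2)
        fix y :: real
        show "norm (indicator {0<..} y * (y * min 2 (y * inverse t))) \<le> 3 * (indicator {0<..} y * mm y)"
        proof (cases "y > 0")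
          case True
          have it: "inverse t \<le> 1" "inverse t \<ge> 0" using elim by (auto simp: inverse_le_1_iff)
          have "y * min 2 (y * inverse t) \<le> (2 + inverse t) * mm y"
            using True it by (intro ymin_le_mm) auto
          also have "\<dots> \<le> 3 * mm y" using it True by (intro mult_right_mono mm_nonneg) auto
          finally have "y * min 2 (y * inverse t) \<le> 3 * mm y" .
          moreover have "0 \<le> y * min 2 (y * inverse t)" using True it by simp
          ultimately show ?thesis using True by simp
        qed simp
      qed
    qed
  qed
  then show "((\<lambda>t. LINT y|M. indicator {0<..} y * (y * min 2 (y * inverse t))) \<longlongrightarrow> 0) at_top" by simp
qed

lemma Phi_deriv:
  assumes z: "Re z > 0"
  shows "(Phi M has_field_derivative DPhi M z) (at z)"
proof -
  define Rf where "Rf h = (LINT y|M. indicator {0<..} y * (y * min 2 (y * h)))" for h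
  have key: "norm (Phi M w - Phi M z - DPhi M z * (w - z)) \<le> Rf (norm (w - z)) * norm (w - z)"
    if w: "Re w \<ge> 0" for w
  proof -
    let ?h = "norm (w - z)"
    have iw: "integrable M (\<lambda>y. indicator {0<..} y *\<^sub>R phi y w)"
      and iz: "integrable M (\<lambda>y. indicator {0<..} y *\<^sub>R phi y z)"
      and id: "integrable M (\<lambda>y. indicator {0<..} y *\<^sub>R dphi y z)"
      using phi_integrable[of w] phi_integrable[of z] dphi_integrable[of z] w z
      by (auto simp: set_integrable_def)
    have "(LINT y|M. indicator {0<..} y *\<^sub>R (phi y w - phi y z - dphi y z * (w - z))) =
      (LINT y|M. (indicator {0<..} y *\<^sub>R phi y w - indicator {0<..} y *\<^sub>R phi y z) - (indicator {0<..} y *\<^sub>R dphi y z) * (w - z))"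
      by (simp add: algebra_simps)
    also have "\<dots> = Phi M w - Phi M z - DPhi M z * (w - z)"
    proof -
      let ?F1 = "\<lambda>y. indicator {0<..} y *\<^sub>R phi y w" and ?F2 = "\<lambda>y. indicator {0<..} y *\<^sub>R phi y z"
        and ?F3 = "\<lambda>y. indicator {0<..} y *\<^sub>R dphi y z"
      have i12: "integrable M (\<lambda>y. ?F1 y - ?F2 y)" using iw iz by (rule Bochner_Integration.integrable_diff)
      have i3: "integrable M (\<lambda>y. ?F3 y * (w - z))" using id by (rule Bochner_Integration.integrable_mult_left)
      have "(LINT y|M. (?F1 y - ?F2 y) - ?F3 y * (w - z)) = (LINT y|M. ?F1 y - ?F2 y) - (LINT y|M. ?F3 y * (w - z))"
        by (rule Bochner_Integration.integral_diff[OF i12 i3])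
      also have "(LINT y|M. ?F1 y - ?F2 y) = (LINT y|M. ?F1 y) - (LINT y|M. ?F2 y)"
        by (rule Bochner_Integration.integral_diff[OF iw iz])
      also have "(LINT y|M. ?F3 y * (w - z)) = (LINT y|M. ?F3 y) * (w - z)"
        by (rule integral_mult_left_zero)
      finally show ?thesis by (simp only: Phi_def DPhi_def set_lebesgue_integral_def)
    qed
    finally have "Phi M w - Phi M z - DPhi M z * (w - z) =
      (LINT y|M. indicator {0<..} y *\<^sub>R (phi y w - phi y z - dphi y z * (w - z)))" ..
    also have "norm \<dots> \<le> (LINT y|M. indicator {0<..} y * (y * min 2 (y * ?h)) * ?h)"
    proof (rule Bochner_Integration.integral_norm_bound_integral)
      have "integrable M (\<lambda>y. (indicator {0<..} y *\<^sub>R phi y w - indicator {0<..} y *\<^sub>R phi y z) - (indicator {0<..} y *\<^sub>R dphi y z) * (w - z))"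
        by (intro Bochner_Integration.integrable_diff Bochner_Integration.integrable_mult_left iw iz id)
      moreover have "(\<lambda>y. (indicator {0<..} y *\<^sub>R phi y w - indicator {0<..} y *\<^sub>R phi y z) - (indicator {0<..} y *\<^sub>R dphi y z) * (w - z))
         = (\<lambda>y. indicator {0<..} y *\<^sub>R (phi y w - phi y z - dphi y z * (w - z)))"
        by (simp add: fun_eq_iff algebra_simps)
      ultimately show "integrable M (\<lambda>y. indicator {0<..} y *\<^sub>R (phi y w - phi y z - dphi y z * (w - z)))"
        by simp
      have "set_integrable M {0<..} (\<lambda>y. y * min 2 (y * ?h) * ?h)"
      proof (rule set_integrable_mm[where C="(2 + ?h) * ?h"])
        fix y :: real assume "0 < y"
        then have "y * min 2 (y * ?h) * ?h \<le> ((2 + ?h) * mm y) * ?h"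
          by (intro mult_right_mono ymin_le_mm) auto
        moreover have "0 \<le> y * min 2 (y * ?h) * ?h" using \<open>0 < y\<close> by simp
        ultimately show "norm (y * min 2 (y * ?h) * ?h) \<le> (2 + ?h) * ?h * mm y"
          by (simp add: algebra_simps)
      qed measurable
      then show "integrable M (\<lambda>y. indicator {0<..} y * (y * min 2 (y * ?h)) * ?h)"
        by (simp add: set_integrable_def mult.assoc)
      fix y
      show "norm (indicator {0<..} y *\<^sub>R (phi y w - phi y z - dphi y z * (w - z))) \<le> indicator {0<..} y * (y * min 2 (y * ?h)) * ?h"
        using phi_remainder[of y z w] z w by (cases "y > 0") (auto simp: indicator_def)
    qed
    also have "\<dots> = Rf ?h * ?h" unfolding Rf_def by simp
    finally show ?thesis .
  qed
  have ev: "\<forall>\<^sub>F w in at z. norm ((Phi M w - Phi M z) / (w - z) - DPhi M z) \<le> Rf (norm (w - z))"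
    unfolding eventually_at
  proof (intro exI conjI ballI allI impI)
    show "Re z > 0" by fact
    fix w assume "w \<noteq> z \<and> dist w z < Re z"
    then have wz: "w \<noteq> z" and dwz: "dist w z < Re z" by auto
    have "Re z - Re w \<le> norm (w - z)"
      using abs_Re_le_cmod[of "w - z"] by simp
    then have "Re w \<ge> 0" using dwz by (simp add: dist_norm)
    have nz: "norm (w - z) > 0" using wz by simp
    have "(Phi M w - Phi M z) / (w - z) - DPhi M z = (Phi M w - Phi M z - DPhi M z * (w - z)) / (w - z)"
      using wz by (simp add: field_simps)
    then have "norm ((Phi M w - Phi M z) / (w - z) - DPhi M z) = norm (Phi M w - Phi M z - DPhi M z * (w - z)) / norm (w - z)"
      by (simp add: norm_divide)
    also have "\<dots> \<le> Rf (norm (w - z)) * norm (w - z) / norm (w - z)"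
      using key[OF \<open>Re w \<ge> 0\<close>] nz by (intro divide_right_mono) auto
    also have "\<dots> = Rf (norm (w - z))" using nz by simp
    finally show "norm ((Phi M w - Phi M z) / (w - z) - DPhi M z) \<le> Rf (norm (w - z))" .
  qed
  have lim_norm: "filterlim (\<lambda>w. norm (w - z)) (at_right 0) (at z)"
    unfolding filterlim_at
  proof
    show "\<forall>\<^sub>F w in at z. norm (w - z) \<in> {0<..} \<and> norm (w - z) \<noteq> 0"
      using eventually_at[of "\<lambda>w. w \<noteq> z" z UNIV] by (auto simp: eventually_at_filter)
    have "((\<lambda>w. norm (w - z)) \<longlongrightarrow> norm (z - z)) (at z)"
      by (intro tendsto_intros)
    then show "((\<lambda>w. norm (w - z)) \<longlongrightarrow> 0) (at z)" by simp
  qed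
  have "((\<lambda>w. Rf (norm (w - z))) \<longlongrightarrow> 0) (at z)"
    using filterlim_compose[OF Rf_tendsto lim_norm] unfolding Rf_def by simp
  then have "((\<lambda>w. (Phi M w - Phi M z) / (w - z) - DPhi M z) \<longlongrightarrow> 0) (at z)"
    by (rule Lim_null_comparison[OF ev])
  then show ?thesis
    unfolding has_field_derivative_iff by (simp add: LIM_zero_iff)
qed

end



lemma tv_bound:
  fixes P Q :: "'a measure" and f :: "'a \<Rightarrow> complex" and g :: "'a \<Rightarrow> real"
  assumes fP: "finite_measure P" and fQ: "finite_measure Q" and sPQ: "sets Q = sets P"
    and intP: "integrable P f" and intQ: "integrable Q f"
    and gm: "g \<in> borel_measurable P" and g0: "\<And>x. 0 \<le> g x"
    and fin: "(\<integral>\<^sup>+x. ennreal (g x) \<partial>tv_diff P Q) < \<infinity>"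
    and bd: "\<And>x. x \<in> space P \<Longrightarrow> norm (f x) \<le> c * g x" and c0: "0 \<le> c"
  shows "norm (integral\<^sup>L P f - integral\<^sup>L Q f) \<le> c * enn2real (\<integral>\<^sup>+x. ennreal (g x) \<partial>tv_diff P Q)"
proof -
  define \<mu> where "\<mu> = sup_measure' P Q"
  have s\<mu>: "sets \<mu> = sets P" and sp\<mu>: "space \<mu> = space P"
    using sPQ by (auto simp: \<mu>_def)
  have spQ: "space Q = space P" using sPQ by (rule sets_eq_imp_space_eq)
  have leP: "emeasure P A \<le> emeasure \<mu> A" if "A \<in> sets P" for A
    unfolding \<mu>_def by (rule le_emeasure_sup_measure'1[OF sPQ that])
  have leQ: "emeasure Q A \<le> emeasure \<mu> A" if "A \<in> sets P" for A
    unfolding \<mu>_def by (rule le_emeasure_sup_measure'2[OF sPQ that])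
  have "emeasure \<mu> (space \<mu>) \<le> emeasure P (space P) + emeasure Q (space P)"
    unfolding \<mu>_def sp\<mu>[unfolded \<mu>_def]
  proof (subst emeasure_sup_measure'[OF sPQ], simp, intro SUP_least add_mono)
    fix Y assume "Y \<in> sets P"
    then show "emeasure P (space P \<inter> Y) \<le> emeasure P (space P)"
      by (intro emeasure_mono) (auto dest: sets.sets_into_space)
    show "emeasure Q (space P \<inter> - Y) \<le> emeasure Q (space P)"
      using \<open>Y \<in> sets P\<close> spQ sPQ by (intro emeasure_mono) auto
  qed
  also have "\<dots> < \<infinity>"
  proof -
    have a: "emeasure P (space P) \<noteq> \<infinity>" using finite_measure.emeasure_finite[OF fP, of "space P"] by (simp add: infinity_ennreal_def)
    have b: "emeasure Q (space P) \<noteq> \<infinity>" using finite_measure.emeasure_finite[OF fQ, of "space P"] by (simp add: infinity_ennreal_def)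
    show ?thesis using a b by (simp add: less_top[symmetric])
  qed
  finally have "emeasure \<mu> (space \<mu>) \<noteq> \<infinity>" by simp
  then interpret mu: finite_measure \<mu> by (rule finite_measureI)
  have acP: "absolutely_continuous \<mu> P" and acQ: "absolutely_continuous \<mu> Q"
    unfolding absolutely_continuous_def
  proof safe
    fix A assume "A \<in> null_sets \<mu>"
    then have A: "A \<in> sets P" "emeasure \<mu> A = 0" using s\<mu> by auto
    show "A \<in> null_sets P" using leP[OF A(1)] A by auto
    show "A \<in> null_sets Q" using leQ[OF A(1)] A sPQ by auto
  qed
  obtain p where pm: "p \<in> borel_measurable \<mu>" and pRN: "AE x in \<mu>. RN_deriv \<mu> P x = ennreal (p x)"
    and p0: "\<And>x. 0 \<le> p x"
    using mu.real_RN_deriv[OF fP acP s\<mu>[symmetric]] by metis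
  obtain q where qm: "q \<in> borel_measurable \<mu>" and qRN: "AE x in \<mu>. RN_deriv \<mu> Q x = ennreal (q x)"
    and q0: "\<And>x. 0 \<le> q x"
    using mu.real_RN_deriv[OF fQ acQ] s\<mu> sPQ by metis
  have eqP: "density \<mu> (\<lambda>x. ennreal (p x)) = P"
    using mu.density_RN_deriv[OF acP s\<mu>[symmetric]] density_cong[OF borel_measurable_RN_deriv _ pRN] pm
    by simp
  have eqQ: "density \<mu> (\<lambda>x. ennreal (q x)) = Q"
    using mu.density_RN_deriv[OF acQ] s\<mu> sPQ density_cong[OF borel_measurable_RN_deriv _ qRN] qm
    by simp
  have pint: "integrable \<mu> p"
  proof (rule integrableI_nonneg)
    show "p \<in> borel_measurable \<mu>" by fact
    show "AE x in \<mu>. 0 \<le> p x" using p0 by simp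
    have "(\<integral>\<^sup>+x. ennreal (p x) \<partial>\<mu>) = (\<integral>\<^sup>+x. ennreal (p x) * indicator (space \<mu>) x \<partial>\<mu>)"
      by (intro nn_integral_cong) auto
    also have "\<dots> = emeasure P (space \<mu>)"
      using emeasure_density[of "\<lambda>x. ennreal (p x)" \<mu> "space \<mu>"] pm eqP by simp
    also have "\<dots> < \<infinity>" using fP by (simp add: finite_measure.emeasure_finite less_top[symmetric] sp\<mu>)
    finally show "(\<integral>\<^sup>+x. ennreal (p x) \<partial>\<mu>) < \<infinity>" .
  qed
  have qint: "integrable \<mu> q"
  proof (rule integrableI_nonneg)
    show "q \<in> borel_measurable \<mu>" by fact
    show "AE x in \<mu>. 0 \<le> q x" using q0 by simp
    have "(\<integral>\<^sup>+x. ennreal (q x) \<partial>\<mu>) = (\<integral>\<^sup>+x. ennreal (q x) * indicator (space \<mu>) x \<partial>\<mu>)"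
      by (intro nn_integral_cong) auto
    also have "\<dots> = emeasure Q (space \<mu>)"
      using emeasure_density[of "\<lambda>x. ennreal (q x)" \<mu> "space \<mu>"] qm eqQ by simp
    also have "\<dots> < \<infinity>" using fQ by (simp add: finite_measure.emeasure_finite less_top[symmetric] sp\<mu> spQ)
    finally show "(\<integral>\<^sup>+x. ennreal (q x) \<partial>\<mu>) < \<infinity>" .
  qed
  have indint: "integrable \<mu> (\<lambda>x. indicator B x * h x)" if "integrable \<mu> h" "B \<in> sets \<mu>" for B and h :: "'a \<Rightarrow> real"
    using integrable_mult_indicator[OF that(2) that(1)] by (simp add: mult.commute)
  have measP: "measure P B = integral\<^sup>L \<mu> (\<lambda>x. indicator B x * p x)" if B: "B \<in> sets \<mu>" for B
  proof -
    have "measure P B = enn2real (emeasure (density \<mu> (\<lambda>x. ennreal (p x))) B)"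
      using eqP by (simp add: measure_def)
    also have "\<dots> = enn2real (\<integral>\<^sup>+x. ennreal (p x) * indicator B x \<partial>\<mu>)"
      using B pm by (simp add: emeasure_density)
    also have "(\<integral>\<^sup>+x. ennreal (p x) * indicator B x \<partial>\<mu>) = (\<integral>\<^sup>+x. ennreal (indicator B x * p x) \<partial>\<mu>)"
      by (intro nn_integral_cong) (auto simp: indicator_def)
    also have "enn2real \<dots> = integral\<^sup>L \<mu> (\<lambda>x. indicator B x * p x)"
      using B pm p0 by (intro integral_eq_nn_integral[symmetric]) auto
    finally show ?thesis .
  qed
  have measQ: "measure Q B = integral\<^sup>L \<mu> (\<lambda>x. indicator B x * q x)" if B: "B \<in> sets \<mu>" for B
  proof -
    have "measure Q B = enn2real (emeasure (density \<mu> (\<lambda>x. ennreal (q x))) B)"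
      using eqQ by (simp add: measure_def)
    also have "\<dots> = enn2real (\<integral>\<^sup>+x. ennreal (q x) * indicator B x \<partial>\<mu>)"
      using B qm by (simp add: emeasure_density)
    also have "(\<integral>\<^sup>+x. ennreal (q x) * indicator B x \<partial>\<mu>) = (\<integral>\<^sup>+x. ennreal (indicator B x * q x) \<partial>\<mu>)"
      by (intro nn_integral_cong) (auto simp: indicator_def)
    also have "enn2real \<dots> = integral\<^sup>L \<mu> (\<lambda>x. indicator B x * q x)"
      using B qm q0 by (intro integral_eq_nn_integral[symmetric]) auto
    finally show ?thesis .
  qed
  have diffPQ: "measure P B - measure Q B = integral\<^sup>L \<mu> (\<lambda>x. indicator B x * (p x - q x))" if B: "B \<in> sets \<mu>" for B
    using B measP measQ indint[OF pint B] indint[OF qint B]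
    by (simp add: right_diff_distrib Bochner_Integration.integral_diff)
  have absint: "integrable \<mu> (\<lambda>x. \<bar>p x - q x\<bar>)"
    using pint qint by (intro integrable_abs Bochner_Integration.integrable_diff)
  define D' where "D' = density \<mu> (\<lambda>x. ennreal \<bar>p x - q x\<bar>)"
  have sD': "sets D' = sets P" using s\<mu> by (simp add: D'_def)
  have emD': "emeasure D' B = ennreal (integral\<^sup>L \<mu> (\<lambda>x. indicator B x * \<bar>p x - q x\<bar>))" if B: "B \<in> sets \<mu>" for B
  proof -
    have "emeasure D' B = (\<integral>\<^sup>+x. ennreal \<bar>p x - q x\<bar> * indicator B x \<partial>\<mu>)"
      unfolding D'_def using B pm qm by (simp add: emeasure_density)
    also have "\<dots> = (\<integral>\<^sup>+x. ennreal (indicator B x * \<bar>p x - q x\<bar>) \<partial>\<mu>)"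
      by (intro nn_integral_cong) (auto simp: indicator_def)
    also have "\<dots> = ennreal (integral\<^sup>L \<mu> (\<lambda>x. indicator B x * \<bar>p x - q x\<bar>))"
      using indint[OF absint B] by (intro nn_integral_eq_integral) auto
    finally show ?thesis .
  qed
  define S where "S = (\<lambda>A. SUP P' \<in> {P'. finite P' \<and> P' \<subseteq> sets P \<and> disjoint P' \<and> \<Union>P' = A}.
            (\<Sum>B\<in>P'. ennreal \<bar>measure P B - measure Q B\<bar>))"
  have termle: "ennreal \<bar>measure P B - measure Q B\<bar> \<le> emeasure D' B" if B: "B \<in> sets P" for B
  proof -
    have "\<bar>measure P B - measure Q B\<bar> \<le> integral\<^sup>L \<mu> (\<lambda>x. \<bar>indicator B x * (p x - q x)\<bar>)"
      using B s\<mu> diffPQ by simp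
    also have "\<dots> = integral\<^sup>L \<mu> (\<lambda>x. indicator B x * \<bar>p x - q x\<bar>)"
      by (intro Bochner_Integration.integral_cong) (auto simp: indicator_def)
    finally show ?thesis using emD'[of B] B s\<mu> by (simp add: ennreal_leI)
  qed
  have SeqD: "S A = emeasure D' A" if A: "A \<in> sets P" for A
  proof (rule antisym)
    show "S A \<le> emeasure D' A"
      unfolding S_def
    proof (rule SUP_least)
      fix P' assume "P' \<in> {P'. finite P' \<and> P' \<subseteq> sets P \<and> disjoint P' \<and> \<Union>P' = A}"
      then have P': "finite P'" "P' \<subseteq> sets P" "disjoint P'" "\<Union>P' = A" by auto
      have "(\<Sum>B\<in>P'. ennreal \<bar>measure P B - measure Q B\<bar>) \<le> (\<Sum>B\<in>P'. emeasure D' B)"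
        using P' termle by (intro sum_mono) auto
      also have "\<dots> = emeasure D' (\<Union>B\<in>P'. id B)"
      proof -
        have "(\<Sum>B\<in>P'. emeasure D' (id B)) = emeasure D' (\<Union>B\<in>P'. id B)"
          by (rule sum_emeasure) (use P' sD' in \<open>auto simp: disjoint_family_on_def disjoint_def\<close>)
        then show ?thesis by simp
      qed
      also have "\<dots> = emeasure D' A" using P' by simp
      finally show "(\<Sum>B\<in>P'. ennreal \<bar>measure P B - measure Q B\<bar>) \<le> emeasure D' A" .
    qed
    show "emeasure D' A \<le> S A"
    proof (cases "A = {}")
      case True then show ?thesis by simp
    next
      case False
      define S0 where "S0 = {x \<in> space \<mu>. q x \<le> p x}"
      have S0: "S0 \<in> sets \<mu>" unfolding S0_def using pm qm by measurable
      have A1: "A \<inter> S0 \<in> sets P" "A - S0 \<in> sets P" using A S0 s\<mu> by auto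
      have ne: "A \<inter> S0 \<noteq> A - S0" using False by auto
      have t1: "ennreal \<bar>measure P (A \<inter> S0) - measure Q (A \<inter> S0)\<bar> = emeasure D' (A \<inter> S0)"
      proof -
        have "integral\<^sup>L \<mu> (\<lambda>x. indicator (A \<inter> S0) x * (p x - q x)) = integral\<^sup>L \<mu> (\<lambda>x. indicator (A \<inter> S0) x * \<bar>p x - q x\<bar>)"
          by (intro Bochner_Integration.integral_cong) (auto simp: indicator_def S0_def)
        moreover have "0 \<le> integral\<^sup>L \<mu> (\<lambda>x. indicator (A \<inter> S0) x * \<bar>p x - q x\<bar>)"
          by (intro integral_nonneg_AE AE_I2) auto
        ultimately show ?thesis using diffPQ[of "A \<inter> S0"] emD'[of "A \<inter> S0"] A1 s\<mu> by simp
      qed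
      have t2: "ennreal \<bar>measure P (A - S0) - measure Q (A - S0)\<bar> = emeasure D' (A - S0)"
      proof -
        have "integral\<^sup>L \<mu> (\<lambda>x. indicator (A - S0) x * (p x - q x)) = integral\<^sup>L \<mu> (\<lambda>x. - (indicator (A - S0) x * \<bar>p x - q x\<bar>))"
          using sets.sets_into_space[OF A] sp\<mu>
          by (intro Bochner_Integration.integral_cong) (auto simp: indicator_def S0_def)
        moreover have "0 \<le> integral\<^sup>L \<mu> (\<lambda>x. indicator (A - S0) x * \<bar>p x - q x\<bar>)"
          by (intro integral_nonneg_AE AE_I2) auto
        ultimately show ?thesis using diffPQ[of "A - S0"] emD'[of "A - S0"] A1 s\<mu> by simp
      qed
      have "emeasure D' A = emeasure D' (A \<inter> S0) + emeasure D' (A - S0)"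
        proof -
        have "A \<inter> S0 \<inter> (A - S0) = {}" "A \<inter> S0 \<union> (A - S0) = A" by auto
        then show ?thesis using A1 sD' plus_emeasure[of "A \<inter> S0" D' "A - S0"] by simp
      qed
      also have "\<dots> = (\<Sum>B\<in>{A \<inter> S0, A - S0}. ennreal \<bar>measure P B - measure Q B\<bar>)"
        using ne t1 t2 by simp
      also have "\<dots> \<le> S A"
        unfolding S_def
        by (rule SUP_upper) (use A1 in \<open>auto simp: disjoint_def\<close>)
      finally show ?thesis .
    qed
  qed
  have tvD: "tv_diff P Q = D'"
  proof (rule measure_eqI)
    have sets_tv: "sets (tv_diff P Q) = sets P"
      unfolding tv_diff_def by (simp add: sets.space_closed)
    then show "sets (tv_diff P Q) = sets D'" using sD' by simp
    fix A assume "A \<in> sets (tv_diff P Q)"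
    then have A: "A \<in> sets P" using sets_tv by simp
    have ms: "measure_space (space D') (sets D') (emeasure D')" by (rule measure_space)
    have spD': "space D' = space P" using sp\<mu> by (simp add: D'_def)
    have "sigma_algebra (space P) (sets P)" by (rule sets.sigma_algebra_axioms)
    moreover have "positive (sets P) S" using ms SeqD
      unfolding measure_space_def positive_def by (simp add: sD')
    moreover have "countably_additive (sets P) S" using ms SeqD
      unfolding measure_space_def countably_additive_def sD' by auto
    ultimately have "emeasure (measure_of (space P) (sets P) S) A = S A"
      using A by (intro emeasure_measure_of_sigma) auto
    then show "emeasure (tv_diff P Q) A = emeasure D' A"
      using SeqD[OF A] unfolding tv_diff_def S_def by simp
  qed
  have fm: "f \<in> borel_measurable \<mu>"
    using borel_measurable_integrable[OF intP] measurable_cong_sets[OF s\<mu> refl] by blast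
  have gmu: "g \<in> borel_measurable \<mu>"
    using gm measurable_cong_sets[OF s\<mu> refl] by blast
  have IP: "integral\<^sup>L P f = integral\<^sup>L \<mu> (\<lambda>x. p x *\<^sub>R f x)"
    using integral_density[OF fm pm] p0 eqP by simp
  have IQ: "integral\<^sup>L Q f = integral\<^sup>L \<mu> (\<lambda>x. q x *\<^sub>R f x)"
    using integral_density[OF fm qm] q0 eqQ by simp
  have iP: "integrable \<mu> (\<lambda>x. p x *\<^sub>R f x)"
    using integrable_density[OF fm pm] p0 eqP intP by simp
  have iQ: "integrable \<mu> (\<lambda>x. q x *\<^sub>R f x)"
    using integrable_density[OF fm qm] q0 eqQ intQ by simp
  have "integral\<^sup>L P f - integral\<^sup>L Q f = integral\<^sup>L \<mu> (\<lambda>x. p x *\<^sub>R f x - q x *\<^sub>R f x)"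
    unfolding IP IQ by (rule Bochner_Integration.integral_diff[OF iP iQ, symmetric])
  also have "\<dots> = integral\<^sup>L \<mu> (\<lambda>x. (p x - q x) *\<^sub>R f x)"
    by (simp add: scaleR_diff_left)
  finally have eqd: "integral\<^sup>L P f - integral\<^sup>L Q f = integral\<^sup>L \<mu> (\<lambda>x. (p x - q x) *\<^sub>R f x)" .
  have iD: "integrable \<mu> (\<lambda>x. (p x - q x) *\<^sub>R f x)"
    using Bochner_Integration.integrable_diff[OF iP iQ] by (simp add: scaleR_diff_left)
  define N where "N = (\<integral>\<^sup>+x. ennreal (g x) \<partial>tv_diff P Q)"
  have N: "N = (\<integral>\<^sup>+x. ennreal \<bar>p x - q x\<bar> * ennreal (g x) \<partial>\<mu>)"
    unfolding N_def tvD D'_def using pm qm gmu by (simp add: nn_integral_density)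
  have "ennreal (norm (integral\<^sup>L P f - integral\<^sup>L Q f)) \<le> (\<integral>\<^sup>+x. norm ((p x - q x) *\<^sub>R f x) \<partial>\<mu>)"
    unfolding eqd by (rule integral_norm_bound_ennreal[OF iD])
  also have "\<dots> \<le> (\<integral>\<^sup>+x. ennreal c * (ennreal \<bar>p x - q x\<bar> * ennreal (g x)) \<partial>\<mu>)"
  proof (rule nn_integral_mono)
    fix x assume x: "x \<in> space \<mu>"
    have "norm ((p x - q x) *\<^sub>R f x) = \<bar>p x - q x\<bar> * norm (f x)" by simp
    also have "\<dots> \<le> \<bar>p x - q x\<bar> * (c * g x)" using bd[of x] x sp\<mu> by (intro mult_left_mono) auto
    finally have "ennreal (norm ((p x - q x) *\<^sub>R f x)) \<le> ennreal (c * (\<bar>p x - q x\<bar> * g x))"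
      by (intro ennreal_leI) (simp add: algebra_simps)
    also have "\<dots> = ennreal c * (ennreal \<bar>p x - q x\<bar> * ennreal (g x))"
      using c0 g0[of x] by (simp add: ennreal_mult)
    finally show "ennreal (norm ((p x - q x) *\<^sub>R f x)) \<le> ennreal c * (ennreal \<bar>p x - q x\<bar> * ennreal (g x))" .
  qed
  also have "\<dots> = ennreal c * N"
    unfolding N using pm qm gmu by (subst nn_integral_cmult) auto
  also have "N = ennreal (enn2real N)" using fin unfolding N_def by (simp add: less_top)
  also have "ennreal c * ennreal (enn2real N) = ennreal (c * enn2real N)"
    using c0 by (simp add: ennreal_mult)
  finally have "ennreal (norm (integral\<^sup>L P f - integral\<^sup>L Q f)) \<le> ennreal (c * enn2real N)" .
  then show ?thesis unfolding N_def
    using c0 by (subst (asm) ennreal_le_iff) (auto simp: N_def)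
qed



lemma uniq_ext:
  fixes h g :: "complex \<Rightarrow> complex"
  assumes ch: "continuous_on {z. Re z \<ge> 0} h" and hh: "h holomorphic_on {z. Re z > 0}"
    and cg: "continuous_on {z. Re z \<ge> 0} g" and hg: "g holomorphic_on {z. Re z > 0}"
    and eq: "\<And>x. x \<ge> 0 \<Longrightarrow> h (complex_of_real x) = g (complex_of_real x)"
    and z: "Re z \<ge> 0"
  shows "h z = g z"
proof -
  have inner: "h w = g w" if w: "Re w > 0" for w
  proof -
    have "(\<lambda>w. h w - g w) w = 0"
    proof (rule analytic_continuation[where f="\<lambda>w. h w - g w" and S="{z. Re z > 0}" and U="complex_of_real ` {0<..}" and \<xi>=1])
      show "(\<lambda>w. h w - g w) holomorphic_on {z. Re z > 0}" using hh hg by (rule holomorphic_on_diff)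
      show "open {z. Re z > 0}" by (rule open_halfspace_Re_gt)
      show "connected {z. Re z > 0}" by (intro convex_connected convex_halfspace_Re_gt)
      show "complex_of_real ` {0<..} \<subseteq> {z. Re z > 0}" by auto
      show "1 \<in> {z. Re z > 0}" by simp
      show "(1::complex) islimpt complex_of_real ` {0<..}"
        unfolding islimpt_approachable
      proof (intro allI impI)
        fix e :: real assume e: "e > 0"
        show "\<exists>x'\<in>complex_of_real ` {0<..}. x' \<noteq> 1 \<and> dist x' 1 < e"
          using e by (intro bexI[of _ "complex_of_real (1 + e/2)"]) (auto simp: dist_norm intro!: image_eqI[of _ _ "1 + e/2"])
      qed
      show "\<And>z. z \<in> complex_of_real ` {0<..} \<Longrightarrow> h z - g z = 0" using eq by auto
      show "w \<in> {z. Re z > 0}" using w by simp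
    qed
    then show ?thesis by simp
  qed
  define r where "r n = inverse (real (Suc n))" for n
  define zn where "zn n = z + complex_of_real (r n)" for n
  have zn_lim: "zn \<longlonglongrightarrow> z"
    unfolding zn_def r_def using tendsto_add[OF tendsto_const tendsto_of_real[OF LIMSEQ_inverse_real_of_nat], of z]
    by simp
  have rpos: "r n > 0" for n by (simp add: r_def)
  have zn_pos: "Re (zn n) > 0" for n
    using z rpos[of n] by (simp add: zn_def)
  have zn_in: "zn n \<in> {z. Re z \<ge> 0}" for n using zn_pos[of n] by simp
  have "(\<lambda>n. h (zn n)) \<longlonglongrightarrow> h z"
    by (rule continuous_on_tendsto_compose[OF ch zn_lim]) (use z zn_in in auto)
  moreover have "(\<lambda>n. g (zn n)) \<longlonglongrightarrow> g z"
    by (rule continuous_on_tendsto_compose[OF cg zn_lim]) (use z zn_in in auto)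
  moreover have "(\<lambda>n. h (zn n)) = (\<lambda>n. g (zn n))" using inner zn_pos by auto
  ultimately show ?thesis using LIMSEQ_unique by metis
qed

lemma Gamma_pos:
  fixes \<beta> :: real assumes "0 < \<beta>" "\<beta> < 1"
  shows "Gamma (-1 - \<beta>) > 0"
proof -
  have ni: "x \<notin> \<int>\<^sub>\<le>\<^sub>0" if "-2 < x" "x < 0" "x \<noteq> -1" for x :: real
  proof
    assume "x \<in> \<int>\<^sub>\<le>\<^sub>0"
    then obtain n :: int where n: "x = of_int n" "n \<le> 0" by (auto elim: nonpos_Ints_cases)
    have "real_of_int (-2) < real_of_int n" using that n by simp
    then have a: "-2 < n" by (simp only: of_int_less_iff)
    have b: "n \<noteq> -1"
    proof
      assume "n = -1" then have "x = -1" using n by simp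
      with that show False by simp
    qed
    show False using a b n(2) \<open>x < 0\<close> n(1) by linarith
  qed
  have e1: "Gamma ((-1 - \<beta>) + 1) = (-1 - \<beta>) * Gamma (-1 - \<beta>)"
    by (rule Gamma_plus1) (use assms in \<open>intro ni\<close>, auto)
  have e2: "Gamma ((-\<beta>) + 1) = (-\<beta>) * Gamma (-\<beta>)"
    by (rule Gamma_plus1) (use assms in \<open>intro ni\<close>, auto)
  have "Gamma (1 - \<beta>) > 0" using assms by simp
  then have "(-\<beta>) * ((-1 - \<beta>) * Gamma (-1 - \<beta>)) > 0" using e1 e2 by simp
  then have "\<beta> * (1 + \<beta>) * Gamma (-1 - \<beta>) > 0" by (simp add: algebra_simps)
  moreover have "\<beta> * (1 + \<beta>) > 0" using assms by simp
  ultimately show ?thesis by (simp add: zero_less_mult_iff)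
qed



context
  fixes M :: "real measure"
  assumes sM: "sets M = sets borel"
    and intM: "integrable M (\<lambda>y. indicator {0<..} y * mm y)"
begin

lemma spM: "space M = UNIV"
  using sets_eq_imp_space_eq[OF sM] by simp

lemma Phi_split:
  assumes z: "Re z \<ge> 0"
  shows "Phi M z = (LINT y:{0<..}|M. indicator {..1} y *\<^sub>R phi y z) + integral\<^sup>L (restrict_space M {1<..}) (\<lambda>y. phi y z)"
    and "integrable (restrict_space M {1<..}) (\<lambda>y. phi y z)"
proof -
  have i1: "set_integrable M {0<..} (\<lambda>y. indicator {..1} y *\<^sub>R phi y z)"
  proof (rule set_integrable_mm[OF sM intM, where C="2 * norm z + norm z ^ 2"])
    fix y :: real assume y: "y > 0"
    have "0 \<le> (2 * norm z + norm z ^ 2) * mm y" using y by (intro mult_nonneg_nonneg mm_nonneg) auto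
    then show "norm (indicator {..1} y *\<^sub>R phi y z) \<le> (2 * norm z + norm z ^ 2) * mm y"
      using phi_bound_mm[of y z] y z by (auto simp: indicator_def)
  qed measurable
  have i2: "set_integrable M {0<..} (\<lambda>y. indicator {1<..} y *\<^sub>R phi y z)"
  proof (rule set_integrable_mm[OF sM intM, where C="2 * norm z + norm z ^ 2"])
    fix y :: real assume y: "y > 0"
    have "0 \<le> (2 * norm z + norm z ^ 2) * mm y" using y by (intro mult_nonneg_nonneg mm_nonneg) auto
    then show "norm (indicator {1<..} y *\<^sub>R phi y z) \<le> (2 * norm z + norm z ^ 2) * mm y"
      using phi_bound_mm[of y z] y z by (auto simp: indicator_def)
  qed measurable
  have "Phi M z = (LINT y:{0<..}|M. indicator {..1} y *\<^sub>R phi y z + indicator {1<..} y *\<^sub>R phi y z)"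
    unfolding Phi_def set_lebesgue_integral_def by (intro Bochner_Integration.integral_cong) (auto simp: indicator_def)
  also have "\<dots> = (LINT y:{0<..}|M. indicator {..1} y *\<^sub>R phi y z) + (LINT y:{0<..}|M. indicator {1<..} y *\<^sub>R phi y z)"
    using i1 i2 by (simp add: set_integral_add)
  also have "(LINT y:{0<..}|M. indicator {1<..} y *\<^sub>R phi y z) = integral\<^sup>L M (\<lambda>y. indicator {1<..} y *\<^sub>R phi y z)"
    unfolding set_lebesgue_integral_def
    by (intro Bochner_Integration.integral_cong) (auto simp: indicator_def)
  also have "\<dots> = integral\<^sup>L (restrict_space M {1<..}) (\<lambda>y. phi y z)"
    using sM spM by (subst integral_restrict_space) auto
  finally show "Phi M z = (LINT y:{0<..}|M. indicator {..1} y *\<^sub>R phi y z) + integral\<^sup>L (restrict_space M {1<..}) (\<lambda>y. phi y z)" .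
  have "integrable M (\<lambda>y. indicator {1<..} y *\<^sub>R phi y z)"
  proof -
    have "integrable M (\<lambda>y. indicator {0<..} y *\<^sub>R (indicator {1<..} y *\<^sub>R phi y z))"
      using i2 by (simp add: set_integrable_def)
    moreover have "(\<lambda>y. indicator {0<..} y *\<^sub>R (indicator {1<..} y *\<^sub>R phi y z)) = (\<lambda>y. indicator {1<..} y *\<^sub>R phi y z)"
      by (auto simp: indicator_def fun_eq_iff)
    ultimately show ?thesis by simp
  qed
  then show "integrable (restrict_space M {1<..}) (\<lambda>y. phi y z)"
    using sM spM by (subst integrable_restrict_space) auto
qed

lemma head_bound:
  assumes z: "Re z \<ge> 0"
  shows "norm (LINT y:{0<..}|M. indicator {..1} y *\<^sub>R phi y z) \<le> norm z ^ 2 * (LINT y|M. indicator {0<..} y * mm y)"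
proof (rule set_integral_mm_bound[OF sM intM])
  fix y :: real assume y: "y > 0"
  show "norm (indicator {..1} y *\<^sub>R phi y z) \<le> norm z ^ 2 * mm y"
  proof (cases "y \<le> 1")
    case True
    then show ?thesis using phi_bound_small[of y z] y z mm_le1[of y] by (simp add: indicator_def)
  next
    case False
    then show ?thesis using y by (simp add: indicator_def mm_nonneg)
  qed
qed measurable

lemma I_nonneg: "0 \<le> (LINT y|M. indicator {0<..} y * mm y)"
  by (intro integral_nonneg_AE AE_I2) (auto simp: mm_def indicator_def)

lemma finite_tail: "finite_measure (restrict_space M {1<..})"
proof (rule finite_measureI)
  have "emeasure M {1<..} = (\<integral>\<^sup>+y. indicator {1<..} y \<partial>M)"
    using sM by (simp add: nn_integral_indicator)
  also have "\<dots> \<le> (\<integral>\<^sup>+y. ennreal (indicator {0<..} y * mm y) \<partial>M)"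
    by (intro nn_integral_mono) (auto simp: indicator_def mm_gt1)
  also have "\<dots> = ennreal (LINT y|M. indicator {0<..} y * mm y)"
    using intM by (intro nn_integral_eq_integral AE_I2) (auto simp: mm_def indicator_def)
  finally have "emeasure M {1<..} < \<infinity>" by (simp add: le_less_trans)
  then show "emeasure (restrict_space M {1<..}) (space (restrict_space M {1<..})) \<noteq> \<infinity>"
    using sM spM by (simp add: emeasure_restrict_space space_restrict_space)
qed

end



lemma Phi_real: "Phi M (complex_of_real x) = complex_of_real (LINT y:{0<..}|M. exp (- y * x) - 1 + y * x)"
proof -
  have "(\<lambda>y. indicator {0<..} y *\<^sub>R phi y (complex_of_real x)) =
        (\<lambda>y. complex_of_real (indicator {0<..} y *\<^sub>R (exp (- y * x) - 1 + y * x)))"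
    by (auto simp: fun_eq_iff phi_def indicator_def simp flip: exp_of_real)
  then have "Phi M (complex_of_real x) = integral\<^sup>L M (\<lambda>y. complex_of_real (indicator {0<..} y *\<^sub>R (exp (- y * x) - 1 + y * x)))"
    unfolding Phi_def set_lebesgue_integral_def by simp
  also have "\<dots> = complex_of_real (integral\<^sup>L M (\<lambda>y. indicator {0<..} y *\<^sub>R (exp (- y * x) - 1 + y * x)))"
    by (rule integral_complex_of_real)
  finally show ?thesis unfolding set_lebesgue_integral_def .
qed

lemma int_powr_01:
  fixes a :: real assumes "a > -1"
  shows "integrable lborel (\<lambda>y. indicator {0..1} y * y powr a)"
proof (rule integrableI_nonneg)
  show "(\<lambda>y. indicator {0..1} y * y powr a) \<in> borel_measurable lborel" by measurable
  show "AE x in lborel. 0 \<le> indicator {0..1} x * x powr a" by (intro AE_I2) (auto simp: indicator_def)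
  have "integral\<^sup>N lborel (\<lambda>x. indicator {0..1} x * x powr a) = 1 powr (a + 1) / (a + 1)"
    by (rule nn_integral_has_integral_lebesgue) (use has_integral_powr_from_0[of a 1] assms in auto)
  then show "(\<integral>\<^sup>+ x. ennreal (indicator {0..1} x * x powr a) \<partial>lborel) < \<infinity>" by simp
qed

lemma int_powr_1inf:
  fixes a :: real assumes "a < -1"
  shows "integrable lborel (\<lambda>y. indicator {1..} y * y powr a)"
proof (rule integrableI_nonneg)
  show "(\<lambda>y. indicator {1..} y * y powr a) \<in> borel_measurable lborel" by measurable
  show "AE x in lborel. 0 \<le> indicator {1..} x * x powr a" by (intro AE_I2) (auto simp: indicator_def)
  have "integral\<^sup>N lborel (\<lambda>x. indicator {1..} x * x powr a) = -(1 powr (a + 1)) / (a + 1)"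
    by (rule nn_integral_has_integral_lebesgue) (use has_integral_powr_to_inf[of a 1] assms in auto)
  then show "(\<integral>\<^sup>+ x. ennreal (indicator {1..} x * x powr a) \<partial>lborel) < \<infinity>" by simp
qed

lemma sets_nu: "sets (nu \<eta> \<beta>) = sets borel" by (simp add: nu_def)

lemma nu_int:
  fixes \<eta> \<beta> :: real assumes b: "0 < \<beta>" "\<beta> < 1" and e: "\<eta> > 0"
  shows "integrable (nu \<eta> \<beta>) (\<lambda>y. indicator {0<..} y * mm y)"
proof -
  define w where "w y = indicator {0<..} y * \<eta> / (Gamma (-1 - \<beta>) * y powr (2 + \<beta>))" for y
  have G: "Gamma (-1 - \<beta>) > 0" using Gamma_pos b by simp
  have w0: "0 \<le> w y" for y using G e by (auto simp: w_def indicator_def)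
  have wm: "w \<in> borel_measurable borel" unfolding w_def by measurable
  define c where "c = \<eta> / Gamma (-1 - \<beta>)"
  have c0: "c > 0" using G e by (simp add: c_def)
  have nu_eq: "nu \<eta> \<beta> = density lborel (\<lambda>y. ennreal (w y))" unfolding nu_def w_def ..
  have bound: "w y * (indicator {0<..} y * mm y) \<le> c * (indicator {0..1} y * y powr (-\<beta>)) + c * (indicator {1..} y * y powr (-1-\<beta>))" for y
  proof (cases "y > 0")
    case False
    then show ?thesis using c0 by (simp add: w_def indicator_def)
  next
    case True
    have wy: "w y = c / y powr (2 + \<beta>)" using True by (simp add: w_def c_def)
    have nn: "0 \<le> c * (indicator {0..1} y * y powr (-\<beta>))" "0 \<le> c * (indicator {1..} y * y powr (-1-\<beta>))"
      using c0 by (auto simp: indicator_def)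
    show ?thesis
    proof (cases "y \<le> 1")
      case True2: True
      have "w y * (indicator {0<..} y * mm y) = c * (y^2 / y powr (2 + \<beta>))"
        using True True2 by (simp add: wy mm_le1)
      also have "y^2 / y powr (2 + \<beta>) = y powr (-\<beta>)"
      proof -
        have "y^2 = y powr 2" using True by (simp add: powr_numeral)
        moreover have "y powr 2 / y powr (2 + \<beta>) = y powr (2 - (2 + \<beta>))" by (simp only: powr_diff)
        ultimately show ?thesis by simp
      qed
      finally show ?thesis using True True2 nn by (simp add: indicator_def)
    next
      case False2: False
      have "w y * (indicator {0<..} y * mm y) = c * (y powr 1 / y powr (2 + \<beta>))"
        using True False2 by (simp add: wy mm_gt1)
      also have "y powr 1 / y powr (2 + \<beta>) = y powr (-1-\<beta>)"
      proof -
        have "y powr 1 / y powr (2 + \<beta>) = y powr (1 - (2 + \<beta>))" by (simp only: powr_diff)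
        then show ?thesis by simp
      qed
      finally show ?thesis using True False2 nn by (simp add: indicator_def)
    qed
  qed
  have "integrable lborel (\<lambda>y. w y * (indicator {0<..} y * mm y))"
  proof (rule Bochner_Integration.integrable_bound[where f="\<lambda>y. c * (indicator {0..1} y * y powr (-\<beta>)) + c * (indicator {1..} y * y powr (-1-\<beta>))"])
    show "integrable lborel (\<lambda>y. c * (indicator {0..1} y * y powr (-\<beta>)) + c * (indicator {1..} y * y powr (-1-\<beta>)))"
      using int_powr_01[of "-\<beta>"] int_powr_1inf[of "-1-\<beta>"] b by (intro Bochner_Integration.integrable_add integrable_mult_right) auto
    show "(\<lambda>y. w y * (indicator {0<..} y * mm y)) \<in> borel_measurable lborel" using wm by measurable
    show "AE y in lborel. norm (w y * (indicator {0<..} y * mm y)) \<le> norm (c * (indicator {0..1} y * y powr (-\<beta>)) + c * (indicator {1..} y * y powr (-1-\<beta>)))"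
    proof (intro AE_I2)
      fix y
      have "0 \<le> w y * (indicator {0<..} y * mm y)" using w0[of y] by (auto simp: indicator_def intro!: mult_nonneg_nonneg mm_nonneg)
      then show "norm (w y * (indicator {0<..} y * mm y)) \<le> norm (c * (indicator {0..1} y * y powr (-\<beta>)) + c * (indicator {1..} y * y powr (-1-\<beta>)))"
        using bound[of y] by simp
    qed
  qed
  then show ?thesis
    unfolding nu_eq using w0 wm by (subst integrable_density) (auto)
qed



theorem lemma2p1:
  fixes \<rho> \<eta> \<beta> \<delta> :: real and \<pi> :: "real measure"
  assumes "\<rho> \<ge> 0"
    and "sets \<pi> = sets borel"
    and "emeasure \<pi> {..0} = 0"
    and "(\<integral>\<^sup>+y\<in>{0<..}. ennreal (min y (y^2)) \<partial>\<pi>) < \<infinity>"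
    and "\<eta> > 0" and "0 < \<beta>" and "\<beta> < 1" and "\<delta> > 0"
    and "(\<integral>\<^sup>+y. ennreal (y powr (1 + \<beta> + \<delta>))
            \<partial>tv_diff (restrict_space \<pi> {1<..}) (restrict_space (nu \<eta> \<beta>) {1<..})) < \<infinity>"
  shows "\<exists>g. continuous_on {z. Re z \<ge> 0} g
            \<and> g holomorphic_on {z. Re z > 0}
            \<and> (\<forall>x\<ge>0. g (complex_of_real x) = complex_of_real (psi1 \<rho> \<pi> \<eta> \<beta> x))
            \<and> (\<forall>h. continuous_on {z. Re z \<ge> 0} h \<and> h holomorphic_on {z. Re z > 0}
                   \<and> (\<forall>x\<ge>0. h (complex_of_real x) = complex_of_real (psi1 \<rho> \<pi> \<eta> \<beta> x))
                   \<longrightarrow> (\<forall>z. Re z \<ge> 0 \<longrightarrow> h z = g z))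
            \<and> (\<exists>\<delta>0>0. \<forall>d. 0 < d \<and> d < \<delta>0 \<longrightarrow>
                 (\<exists>C>0. \<forall>z. Re z \<ge> 0 \<longrightarrow>
                    cmod (g z) \<le> C * cmod z powr (1 + \<beta> + d) + C * cmod z ^ 2))"
proof -
  note rho0 = assms(1) and s\<pi> = assms(2) and fin\<pi> = assms(4) and e0 = assms(5)
    and b0 = assms(6) and b1 = assms(7) and d0 = assms(8) and tvfin = assms(9)
  define \<nu> where "\<nu> = nu \<eta> \<beta>"
  have s\<nu>: "sets \<nu> = sets borel" unfolding \<nu>_def by (rule sets_nu)
  have int\<nu>: "integrable \<nu> (\<lambda>y. indicator {0<..} y * mm y)"
    unfolding \<nu>_def using nu_int b0 b1 e0 by blast
  have int\<pi>: "integrable \<pi> (\<lambda>y. indicator {0<..} y * mm y)"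
  proof (rule integrableI_nonneg)
    have "(\<lambda>y. indicator {0<..} y * mm y) \<in> borel_measurable borel" by measurable
    then show "(\<lambda>y. indicator {0<..} y * mm y) \<in> borel_measurable \<pi>"
      using measurable_cong_sets[OF s\<pi> refl] by blast
    show "AE x in \<pi>. 0 \<le> indicator {0<..} x * mm x"
      by (intro AE_I2) (auto simp: indicator_def mm_def)
    have "(\<integral>\<^sup>+y. ennreal (indicator {0<..} y * mm y) \<partial>\<pi>) = (\<integral>\<^sup>+y\<in>{0<..}. ennreal (min y (y^2)) \<partial>\<pi>)"
      by (intro nn_integral_cong) (auto simp: indicator_def mm_def)
    then show "(\<integral>\<^sup>+y. ennreal (indicator {0<..} y * mm y) \<partial>\<pi>) < \<infinity>" using fin\<pi> by simp
  qed
  define G where "G z = complex_of_real \<rho> * z^2 + Phi \<pi> z - Phi \<nu> z" for z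
  have cont: "continuous_on {z. Re z \<ge> 0} G"
    unfolding G_def using Phi_cont[OF s\<pi> int\<pi>] Phi_cont[OF s\<nu> int\<nu>]
    by (intro continuous_intros) auto
  have holo: "G holomorphic_on {z. Re z > 0}"
  proof (subst holomorphic_on_open[OF open_halfspace_Re_gt], intro ballI)
    fix z assume z: "z \<in> {z. Re z > 0}"
    have d1: "((\<lambda>z. complex_of_real \<rho> * z^2) has_field_derivative complex_of_real \<rho> * (2 * z)) (at z)"
      by (auto intro!: derivative_eq_intros)
    have "((\<lambda>z. complex_of_real \<rho> * z^2 + Phi \<pi> z - Phi \<nu> z) has_field_derivative
            (complex_of_real \<rho> * (2 * z) + DPhi \<pi> z - DPhi \<nu> z)) (at z)"
      using z by (intro DERIV_diff DERIV_add d1 Phi_deriv[OF s\<pi> int\<pi>] Phi_deriv[OF s\<nu> int\<nu>]) auto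
    then have "(G has_field_derivative (complex_of_real \<rho> * (2 * z) + DPhi \<pi> z - DPhi \<nu> z)) (at z)"
      unfolding G_def[abs_def] .
    then show "\<exists>f'. (G has_field_derivative f') (at z)" by blast
  qed
  have real: "\<forall>x\<ge>0. G (complex_of_real x) = complex_of_real (psi1 \<rho> \<pi> \<eta> \<beta> x)"
    by (simp add: G_def psi1_def Phi_real \<nu>_def)
  have uniq: "\<forall>h. continuous_on {z. Re z \<ge> 0} h \<and> h holomorphic_on {z. Re z > 0}
                   \<and> (\<forall>x\<ge>0. h (complex_of_real x) = complex_of_real (psi1 \<rho> \<pi> \<eta> \<beta> x))
                   \<longrightarrow> (\<forall>z. Re z \<ge> 0 \<longrightarrow> h z = G z)"
    using uniq_ext[OF _ _ cont holo] real by auto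
  define P where "P = restrict_space \<pi> {1<..}"
  define Q where "Q = restrict_space \<nu> {1<..}"
  define N where "N = (\<integral>\<^sup>+y. ennreal (y powr (1 + \<beta> + \<delta>)) \<partial>tv_diff P Q)"
  define K where "K = enn2real N"
  have K0: "K \<ge> 0" by (simp add: K_def)
  define I\<pi> where "I\<pi> = (LINT y|\<pi>. indicator {0<..} y * mm y)"
  define I\<nu> where "I\<nu> = (LINT y|\<nu>. indicator {0<..} y * mm y)"
  have I\<pi>0: "I\<pi> \<ge> 0" unfolding I\<pi>_def by (rule I_nonneg[OF s\<pi> int\<pi>])
  have I\<nu>0: "I\<nu> \<ge> 0" unfolding I\<nu>_def by (rule I_nonneg[OF s\<nu> int\<nu>])
  have bound: "\<exists>\<delta>0>0. \<forall>d. 0 < d \<and> d < \<delta>0 \<longrightarrow>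
                 (\<exists>C>0. \<forall>z. Re z \<ge> 0 \<longrightarrow>
                    cmod (G z) \<le> C * cmod z powr (1 + \<beta> + d) + C * cmod z ^ 2)"
  proof (rule exI[of _ "min \<delta> (1 - \<beta>)"], intro conjI allI impI)
    show "min \<delta> (1 - \<beta>) > 0" using d0 b1 by simp
    fix d assume d: "0 < d \<and> d < min \<delta> (1 - \<beta>)"
    define s where "s = 1 + \<beta> + d"
    have s1: "1 \<le> s" "s \<le> 2" "s \<le> 1 + \<beta> + \<delta>" using d b0 unfolding s_def by auto
    define C where "C = \<rho> + I\<pi> + I\<nu> + 2 * K + 1"
    show "\<exists>C>0. \<forall>z. Re z \<ge> 0 \<longrightarrow> cmod (G z) \<le> C * cmod z powr (1 + \<beta> + d) + C * cmod z ^ 2"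
    proof (intro exI[of _ C] conjI allI impI)
      show "C > 0" unfolding C_def using rho0 I\<pi>0 I\<nu>0 K0 by simp
      fix z assume z: "Re z \<ge> 0"
      note sp\<pi> = Phi_split[OF s\<pi> int\<pi> z] and sp\<nu> = Phi_split[OF s\<nu> int\<nu> z]
      define H\<pi> where "H\<pi> = (LINT y:{0<..}|\<pi>. indicator {..1} y *\<^sub>R phi y z)"
      define H\<nu> where "H\<nu> = (LINT y:{0<..}|\<nu>. indicator {..1} y *\<^sub>R phi y z)"
      define T where "T = integral\<^sup>L P (\<lambda>y. phi y z) - integral\<^sup>L Q (\<lambda>y. phi y z)"
      have Geq: "G z = complex_of_real \<rho> * z^2 + H\<pi> - H\<nu> + T"
        unfolding G_def T_def H\<pi>_def H\<nu>_def P_def Q_def sp\<pi>(1) sp\<nu>(1) by (simp add: algebra_simps)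
      have hH\<pi>: "norm H\<pi> \<le> norm z ^ 2 * I\<pi>" unfolding H\<pi>_def I\<pi>_def by (rule head_bound[OF s\<pi> int\<pi> z])
      have hH\<nu>: "norm H\<nu> \<le> norm z ^ 2 * I\<nu>" unfolding H\<nu>_def I\<nu>_def by (rule head_bound[OF s\<nu> int\<nu> z])
      have hT: "norm T \<le> (2 * norm z powr s) * K"
        unfolding T_def K_def N_def
      proof (rule tv_bound)
        show "finite_measure P" unfolding P_def by (rule finite_tail[OF s\<pi> int\<pi>])
        show "finite_measure Q" unfolding Q_def by (rule finite_tail[OF s\<nu> int\<nu>])
        show "sets Q = sets P" unfolding P_def Q_def using s\<pi> s\<nu> by (simp add: sets_restrict_space)
        show "integrable P (\<lambda>y. phi y z)" unfolding P_def by (rule sp\<pi>(2))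
        show "integrable Q (\<lambda>y. phi y z)" unfolding Q_def by (rule sp\<nu>(2))
        have "(\<lambda>y::real. y powr (1 + \<beta> + \<delta>)) \<in> borel_measurable borel" by measurable
        then have "(\<lambda>y::real. y powr (1 + \<beta> + \<delta>)) \<in> borel_measurable \<pi>"
          using measurable_cong_sets[OF s\<pi> refl] by blast
        then show "(\<lambda>y::real. y powr (1 + \<beta> + \<delta>)) \<in> borel_measurable P"
          unfolding P_def by (rule measurable_restrict_space1)
        show "\<And>x. 0 \<le> x powr (1 + \<beta> + \<delta>)" by simp
        show "(\<integral>\<^sup>+ x. ennreal (x powr (1 + \<beta> + \<delta>)) \<partial>tv_diff P Q) < \<infinity>"
          using tvfin unfolding P_def Q_def \<nu>_def .
        show "0 \<le> 2 * norm z powr s" by simp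
        fix x assume "x \<in> space P"
        then have "x > 1" unfolding P_def by (simp add: space_restrict_space)
        then show "norm (phi x z) \<le> 2 * norm z powr s * x powr (1 + \<beta> + \<delta>)"
          by (rule phi_bound_tail) (use z s1 in auto)
      qed
      have "norm (G z) \<le> norm (complex_of_real \<rho> * z^2) + norm H\<pi> + norm H\<nu> + norm T"
        unfolding Geq by (smt (verit) norm_triangle_ineq norm_triangle_ineq4)
      also have "norm (complex_of_real \<rho> * z^2) = \<rho> * norm z ^ 2"
        using rho0 by (simp add: norm_mult norm_power)
      finally have "norm (G z) \<le> (\<rho> + I\<pi> + I\<nu>) * norm z ^ 2 + (2 * K) * norm z powr s"
        using hH\<pi> hH\<nu> hT by (simp add: algebra_simps)
      also have "\<dots> \<le> C * norm z ^ 2 + C * norm z powr s"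
      proof -
        have a: "(\<rho> + I\<pi> + I\<nu>) * norm z ^ 2 \<le> C * norm z ^ 2"
          unfolding C_def using K0 by (intro mult_right_mono) auto
        have b: "(2 * K) * norm z powr s \<le> C * norm z powr s"
          unfolding C_def using K0 I\<pi>0 I\<nu>0 rho0 by (intro mult_right_mono) auto
        show ?thesis using a b by linarith
      qed
      finally show "cmod (G z) \<le> C * cmod z powr (1 + \<beta> + d) + C * cmod z ^ 2"
        unfolding s_def by simp
    qed
  qed
  show ?thesis
    using cont holo real uniq bound by blast
qed

end
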